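(* Let $n\ge2$, let $\alpha_i,\beta_i>0$ ($i=1,\dots,n$) satisfy $\sum_i\alpha_i=\sum_i\beta_i=1$, let $C$ be a convex subset of a real linear space, let $f:C\to\mathbb R$ be strictly convex, and let $x_1,\dots,x_n\in C$. Set $A:=\{i: \alpha_i/\beta_i=\min_k\alpha_k/\beta_k\}$ and $B:=\{i:\alpha_i/\beta_i=\max_k\alpha_k/\beta_k\}$. Then the inequalities $$\min_{k}\left\{\frac{\alpha_k}{\beta_k}\right\}\left(\sum_{i=1}^n\beta_i f(x_i)-f\Big(\sum_{i=1}^n\beta_i x_i\Big)\right)\le \sum_{i=1}^n\alpha_i f(x_i)-f\Big(\sum_{i=1}^n\alpha_i x_i\Big)\le \max_{k}\left\{\frac{\alpha_k}{\beta_k}\right\}\left(\sum_{i=1}^n\beta_i f(x_i)-f\Big(\sum_{i=1}^n\beta_i x_i\Big)\right)$$ hold; equality holds in the left inequality if and only if for every $j\in\{1,\dots,n\}\setminus A$, $$x_j=\sum_{i\in A}\frac{\alpha_i}{\sum_{l\in A}\alpha_l}x_i=\sum_{i=1}^n\alpha_i x_i,$$ or equivalently $x_j=\sum_{i\in A}\frac{\beta_i}{\sum_{l\in A}\beta_l}x_i=\sum_{i=1}^n\beta_i x_i$; and equality holds in the right inequality if and only if for every $j\in\{1,\dots,n\}\setminus B$, $$x_j=\sum_{i\in B}\frac{\alpha_i}{\sum_{l\in B}\alpha_l}x_i=\sum_{i=1}^n\alpha_i x_i,$$ or equivalently $x_j=\sum_{i\in B}\frac{\beta_i}{\sum_{l\in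 B}\beta_l}x_i=\sum_{i=1}^n\beta_i x_i$. *)

theory Defs
  imports "HOL-Analysis.Analysis"
begin

definition strictly_convex_on :: "'a::real_vector set \<Rightarrow> ('a \<Rightarrow> real) \<Rightarrow> bool" where
  "strictly_convex_on C f \<longleftrightarrow> convex C \<and>
     (\<forall>x\<in>C. \<forall>y\<in>C. x \<noteq> y \<longrightarrow> (\<forall>t::real. 0 < t \<and> t < 1 \<longrightarrow>
        f ((1 - t) *\<^sub>R x + t *\<^sub>R y) < (1 - t) * f x + t * f y))"

end

theory Submission
  imports Defs
begin

lemma strict_imp_convex_on:
  assumes "strictly_convex_on C f" shows "convex_on C f"
proof (rule convex_onI)
  show "convex C" using assms unfolding strictly_convex_on_def by blast
next
  fix t :: real and x y assume t: "0 < t" "t < 1" and xy: "x \<in> C" "y \<in> C"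
  show "f ((1 - t) *\<^sub>R x + t *\<^sub>R y) \<le> (1 - t) * f x + t * f y"
  proof (cases "x = y")
    case True
    have "(1 - t) *\<^sub>R y + t *\<^sub>R y = y" by (simp add: algebra_simps)
    then show ?thesis using True by (simp add: algebra_simps)
  next
    case False
    then show ?thesis using assms t xy unfolding strictly_convex_on_def by (meson less_imp_le)
  qed
qed

lemma jensen_strict:
  fixes w :: "'i \<Rightarrow> real" and z :: "'i \<Rightarrow> 'a::real_vector"
  assumes sc: "strictly_convex_on C f" and fin: "finite I"
    and wpos: "\<forall>i\<in>I. w i \<ge> 0" and ws: "sum w I = 1" and zC: "\<forall>i\<in>I. z i \<in> C"
  shows "f (\<Sum>i\<in>I. w i *\<^sub>R z i) \<le> (\<Sum>i\<in>I. w i * f (z i))"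
    and "f (\<Sum>i\<in>I. w i *\<^sub>R z i) = (\<Sum>i\<in>I. w i * f (z i)) \<longleftrightarrow>
          (\<forall>i\<in>I. w i > 0 \<longrightarrow> z i = (\<Sum>i\<in>I. w i *\<^sub>R z i))"
proof -
  have cvx: "convex_on C f" using sc by (rule strict_imp_convex_on)
  have cC: "convex C" using sc unfolding strictly_convex_on_def by blast
  have Ine: "I \<noteq> {}" using ws by auto
  show le: "f (\<Sum>i\<in>I. w i *\<^sub>R z i) \<le> (\<Sum>i\<in>I. w i * f (z i))"
    using convex_on_sum[OF fin Ine cvx ws] wpos zC by blast
  define p where "p = (\<Sum>i\<in>I. w i *\<^sub>R z i)"
  show "f (\<Sum>i\<in>I. w i *\<^sub>R z i) = (\<Sum>i\<in>I. w i * f (z i)) \<longleftrightarrow>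
          (\<forall>i\<in>I. w i > 0 \<longrightarrow> z i = (\<Sum>i\<in>I. w i *\<^sub>R z i))"
    unfolding p_def[symmetric]
  proof
    assume eq: "f p = (\<Sum>i\<in>I. w i * f (z i))"
    show "\<forall>i\<in>I. w i > 0 \<longrightarrow> z i = p"
    proof (intro ballI impI, rule ccontr)
      fix i assume iI: "i \<in> I" and wi: "w i > 0" and ne: "z i \<noteq> p"
      define u where "u = w i"
      let ?R = "I - {i}"
      have finR: "finite ?R" using fin by simp
      have sumR: "sum w ?R = 1 - u" using sum.remove[OF fin iI, of w] ws u_def by simp
      have Rnn: "\<forall>k\<in>?R. w k \<ge> 0" using wpos by blast
      have pdec: "p = u *\<^sub>R z i + (\<Sum>k\<in>?R. w k *\<^sub>R z k)"
        unfolding p_def u_def using sum.remove[OF fin iI] by blast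
      have fdec: "(\<Sum>k\<in>I. w k * f (z k)) = u * f (z i) + (\<Sum>k\<in>?R. w k * f (z k))"
        unfolding u_def using sum.remove[OF fin iI] by blast
      have "sum w ?R \<ge> 0" using Rnn by (meson sum_nonneg)
      then have "u \<le> 1" using sumR by linarith
      show False
      proof (cases "u = 1")
        case True
        then have "sum w ?R = 0" using sumR by simp
        then have "\<forall>k\<in>?R. w k = 0" using sum_nonneg_eq_0_iff[OF finR] Rnn by blast
        then have "(\<Sum>k\<in>?R. w k *\<^sub>R z k) = 0" by simp
        then have "p = z i" using pdec True by simp
        then show False using ne by simp
      next
        case False
        with \<open>u \<le> 1\<close> have u1: "u < 1" by simp
        have u0: "0 < u" using wi u_def by simp
        define q where "q = (\<Sum>k\<in>?R. (w k / (1 - u)) *\<^sub>R z k)"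
        have s1: "(\<Sum>k\<in>?R. w k / (1 - u)) = 1"
          using sumR u1 by (simp add: sum_divide_distrib[symmetric])
        have nn: "\<And>k. k \<in> ?R \<Longrightarrow> w k / (1 - u) \<ge> 0" using Rnn u1 by simp
        have qC: "q \<in> C" unfolding q_def
          by (rule convex_sum[OF finR cC s1 nn]) (use zC in auto)
        have Rne: "?R \<noteq> {}" using s1 by (metis sum.empty zero_neq_one)
        have fq: "f q \<le> (\<Sum>k\<in>?R. (w k / (1 - u)) * f (z k))"
          unfolding q_def using convex_on_sum[OF finR Rne cvx s1 nn] zC by blast
        have qs: "(1 - u) *\<^sub>R q = (\<Sum>k\<in>?R. w k *\<^sub>R z k)"
          unfolding q_def using u1 by (simp add: scaleR_sum_right)
        have fqs: "(1 - u) * (\<Sum>k\<in>?R. (w k / (1 - u)) * f (z k)) = (\<Sum>k\<in>?R. w k * f (z k))"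
          using u1 by (simp add: sum_distrib_left)
        have pq: "p = (1 - u) *\<^sub>R q + u *\<^sub>R z i" using pdec qs by simp
        have qne: "q \<noteq> z i"
        proof
          assume "q = z i"
          then have "p = z i" using pq by (simp add: algebra_simps)
          then show False using ne by simp
        qed
        have "f p < (1 - u) * f q + u * f (z i)"
          using sc qne qC zC iI u0 u1 unfolding strictly_convex_on_def pq by blast
        also have "\<dots> \<le> (1 - u) * (\<Sum>k\<in>?R. (w k / (1 - u)) * f (z k)) + u * f (z i)"
          using fq u1 by (simp add: mult_left_mono)
        also have "\<dots> = (\<Sum>k\<in>I. w k * f (z k))" using fqs fdec by simp
        finally show False using eq by simp
      qed
    qed
  next
    assume all: "\<forall>i\<in>I. w i > 0 \<longrightarrow> z i = p"
    have e1: "\<And>i. i \<in> I \<Longrightarrow> w i *\<^sub>R z i = w i *\<^sub>R p"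
      using all wpos by (metis less_eq_real_def scale_zero_left)
    have e2: "\<And>i. i \<in> I \<Longrightarrow> w i * f (z i) = w i * f p"
      using all wpos by (metis less_eq_real_def mult_zero_left)
    have "(\<Sum>i\<in>I. w i * f (z i)) = (\<Sum>i\<in>I. w i * f p)" using e2 by (rule sum.cong[OF refl])
    also have "\<dots> = f p" using ws by (simp add: sum_distrib_right[symmetric])
    finally show "f p = (\<Sum>i\<in>I. w i * f (z i))" by simp
  qed
qed


lemma split_lemma:
  fixes g :: "nat \<Rightarrow> real" and x :: "nat \<Rightarrow> 'a::real_vector"
  assumes fin: "finite I" and AI: "A \<subseteq> I" and gs: "sum g I = 1" and SA: "sum g A > 0"
    and xc: "\<forall>j\<in>I-A. x j = c"
  shows "(\<Sum>i\<in>I. g i *\<^sub>R x i) = c \<longleftrightarrow> (\<Sum>i\<in>A. (g i / sum g A) *\<^sub>R x i) = c"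
proof -
  have finA: "finite A" using fin AI finite_subset by blast
  have sI: "sum g I = sum g A + sum g (I - A)" using sum.subset_diff[OF AI fin, of g] by linarith
  have "(\<Sum>i\<in>I. g i *\<^sub>R x i) = (\<Sum>i\<in>A. g i *\<^sub>R x i) + (\<Sum>i\<in>I-A. g i *\<^sub>R x i)"
    using sum.subset_diff[OF AI fin, of "\<lambda>i. g i *\<^sub>R x i"] by (simp add: add.commute)
  also have "(\<Sum>i\<in>I-A. g i *\<^sub>R x i) = (\<Sum>i\<in>I-A. g i *\<^sub>R c)"
    using xc by (intro sum.cong) auto
  also have "\<dots> = (1 - sum g A) *\<^sub>R c" proof -
    have "sum g (I - A) = 1 - sum g A" using sI gs by linarith
    then show ?thesis by (simp add: scaleR_sum_left[symmetric])
  qed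
  finally have e: "(\<Sum>i\<in>I. g i *\<^sub>R x i) = (\<Sum>i\<in>A. g i *\<^sub>R x i) + (1 - sum g A) *\<^sub>R c" .
  have e2: "(\<Sum>i\<in>A. (g i / sum g A) *\<^sub>R x i) = (1 / sum g A) *\<^sub>R (\<Sum>i\<in>A. g i *\<^sub>R x i)"
    by (simp add: scaleR_sum_right)
  have "(\<Sum>i\<in>I. g i *\<^sub>R x i) = c \<longleftrightarrow> (\<Sum>i\<in>A. g i *\<^sub>R x i) = sum g A *\<^sub>R c"
    unfolding e by (auto simp: algebra_simps)
  also have "\<dots> \<longleftrightarrow> (1 / sum g A) *\<^sub>R (\<Sum>i\<in>A. g i *\<^sub>R x i) = c"
  proof
    assume h: "(\<Sum>i\<in>A. g i *\<^sub>R x i) = sum g A *\<^sub>R c"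
    show "(1 / sum g A) *\<^sub>R (\<Sum>i\<in>A. g i *\<^sub>R x i) = c" unfolding h using SA by simp
  next
    assume h: "(1 / sum g A) *\<^sub>R (\<Sum>i\<in>A. g i *\<^sub>R x i) = c"
    have "(\<Sum>i\<in>A. g i *\<^sub>R x i) = sum g A *\<^sub>R ((1 / sum g A) *\<^sub>R (\<Sum>i\<in>A. g i *\<^sub>R x i))"
      using SA by simp
    then show "(\<Sum>i\<in>A. g i *\<^sub>R x i) = sum g A *\<^sub>R c" unfolding h .
  qed
  finally show ?thesis unfolding e2 .
qed

lemma alg_lemma:
  fixes \<alpha> \<beta> :: "nat \<Rightarrow> real" and x :: "nat \<Rightarrow> 'a::real_vector"
  assumes fin: "finite I" and AI: "A \<subseteq> I" and Ane: "A \<noteq> {}" and IAne: "I - A \<noteq> {}"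
    and as: "sum \<alpha> I = 1" and bs: "sum \<beta> I = 1"
    and ap: "\<forall>i\<in>I. \<alpha> i > 0" and bp: "\<forall>i\<in>I. \<beta> i > 0"
    and k: "k > 0" and ak: "\<forall>i\<in>A. \<alpha> i = k * \<beta> i"
  shows "((\<Sum>i\<in>I. \<beta> i *\<^sub>R x i) = (\<Sum>i\<in>I. \<alpha> i *\<^sub>R x i) \<and> (\<forall>j\<in>I-A. x j = (\<Sum>i\<in>I. \<alpha> i *\<^sub>R x i)))
       \<longleftrightarrow> (\<forall>j\<in>I-A. x j = (\<Sum>i\<in>A. (\<alpha> i / (\<Sum>l\<in>A. \<alpha> l)) *\<^sub>R x i) \<and> x j = (\<Sum>i\<in>I. \<alpha> i *\<^sub>R x i))"
    and "((\<Sum>i\<in>I. \<beta> i *\<^sub>R x i) = (\<Sum>i\<in>I. \<alpha> i *\<^sub>R x i) \<and> (\<forall>j\<in>I-A. x j = (\<Sum>i\<in>I. \<alpha> i *\<^sub>R x i)))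
       \<longleftrightarrow> (\<forall>j\<in>I-A. x j = (\<Sum>i\<in>A. (\<beta> i / (\<Sum>l\<in>A. \<beta> l)) *\<^sub>R x i) \<and> x j = (\<Sum>i\<in>I. \<beta> i *\<^sub>R x i))"
proof -
  have finA: "finite A" using fin AI finite_subset by blast
  have SAa: "sum \<alpha> A > 0" using finA Ane ap AI by (intro sum_pos) auto
  have SAb: "sum \<beta> A > 0" using finA Ane bp AI by (intro sum_pos) auto
  have sak: "sum \<alpha> A = k * sum \<beta> A" using ak by (simp add: sum_distrib_left)
  have ab: "(\<Sum>i\<in>A. (\<alpha> i / (\<Sum>l\<in>A. \<alpha> l)) *\<^sub>R x i) = (\<Sum>i\<in>A. (\<beta> i / (\<Sum>l\<in>A. \<beta> l)) *\<^sub>R x i)"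
  proof (intro sum.cong refl)
    fix i assume i: "i \<in> A"
    have "\<alpha> i / sum \<alpha> A = (k * \<beta> i) / (k * sum \<beta> A)" unfolding sak using ak i by simp
    also have "\<dots> = \<beta> i / sum \<beta> A" using k by simp
    finally show "(\<alpha> i / (\<Sum>l\<in>A. \<alpha> l)) *\<^sub>R x i = (\<beta> i / (\<Sum>l\<in>A. \<beta> l)) *\<^sub>R x i" by simp
  qed
  obtain j0 where j0: "j0 \<in> I - A" using IAne by blast
  let ?ya = "\<Sum>i\<in>I. \<alpha> i *\<^sub>R x i" and ?yb = "\<Sum>i\<in>I. \<beta> i *\<^sub>R x i"
  let ?aA = "\<Sum>i\<in>A. (\<alpha> i / (\<Sum>l\<in>A. \<alpha> l)) *\<^sub>R x i"
  let ?bA = "\<Sum>i\<in>A. (\<beta> i / (\<Sum>l\<in>A. \<beta> l)) *\<^sub>R x i"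
  have Sa: "\<And>c. \<forall>j\<in>I-A. x j = c \<Longrightarrow> ?ya = c \<longleftrightarrow> ?aA = c"
    by (rule split_lemma[OF fin AI as SAa])
  have Sb: "\<And>c. \<forall>j\<in>I-A. x j = c \<Longrightarrow> ?yb = c \<longleftrightarrow> ?bA = c"
    by (rule split_lemma[OF fin AI bs SAb])
  show "(?yb = ?ya \<and> (\<forall>j\<in>I-A. x j = ?ya)) \<longleftrightarrow> (\<forall>j\<in>I-A. x j = ?aA \<and> x j = ?ya)"
  proof
    assume L: "?yb = ?ya \<and> (\<forall>j\<in>I-A. x j = ?ya)"
    then have "?aA = ?ya" using Sa[of ?ya] by blast
    then show "\<forall>j\<in>I-A. x j = ?aA \<and> x j = ?ya" using L by simp
  next
    assume P: "\<forall>j\<in>I-A. x j = ?aA \<and> x j = ?ya"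
    then have all: "\<forall>j\<in>I-A. x j = ?ya" by blast
    have "?aA = ?ya" using P j0 by metis
    then have "?bA = ?ya" using ab by simp
    then have "?yb = ?ya" using Sb[OF all] by blast
    then show "?yb = ?ya \<and> (\<forall>j\<in>I-A. x j = ?ya)" using all by blast
  qed
  show "(?yb = ?ya \<and> (\<forall>j\<in>I-A. x j = ?ya)) \<longleftrightarrow> (\<forall>j\<in>I-A. x j = ?bA \<and> x j = ?yb)"
  proof
    assume L: "?yb = ?ya \<and> (\<forall>j\<in>I-A. x j = ?ya)"
    then have all: "\<forall>j\<in>I-A. x j = ?yb" by simp
    have "?bA = ?yb" using Sb[OF all] by blast
    then show "\<forall>j\<in>I-A. x j = ?bA \<and> x j = ?yb" using all by simp
  next
    assume P: "\<forall>j\<in>I-A. x j = ?bA \<and> x j = ?yb"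
    then have all: "\<forall>j\<in>I-A. x j = ?yb" by blast
    have "?bA = ?yb" using P j0 by metis
    then have "?aA = ?yb" using ab by simp
    then have "?ya = ?yb" using Sa[OF all] by blast
    then show "?yb = ?ya \<and> (\<forall>j\<in>I-A. x j = ?ya)" using all by simp
  qed
qed


theorem proposition2p4:
  fixes n :: nat and \<alpha> \<beta> :: "nat \<Rightarrow> real" and C :: "'a::real_vector set"
    and f :: "'a \<Rightarrow> real" and x :: "nat \<Rightarrow> 'a"
  assumes n2: "n \<ge> 2"
    and apos: "\<forall>i\<in>{1..n}. \<alpha> i > 0" and bpos: "\<forall>i\<in>{1..n}. \<beta> i > 0"
    and asum: "(\<Sum>i=1..n. \<alpha> i) = 1" and bsum: "(\<Sum>i=1..n. \<beta> i) = 1"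
    and convC: "convex C" and strict: "strictly_convex_on C f"
    and xC: "\<forall>i\<in>{1..n}. x i \<in> C"
  defines "m \<equiv> Min ((\<lambda>k. \<alpha> k / \<beta> k) ` {1..n})"
    and "M \<equiv> Max ((\<lambda>k. \<alpha> k / \<beta> k) ` {1..n})"
    and "A \<equiv> {i\<in>{1..n}. \<alpha> i / \<beta> i = Min ((\<lambda>k. \<alpha> k / \<beta> k) ` {1..n})}"
    and "B \<equiv> {i\<in>{1..n}. \<alpha> i / \<beta> i = Max ((\<lambda>k. \<alpha> k / \<beta> k) ` {1..n})}"
    and "J\<alpha> \<equiv> (\<Sum>i=1..n. \<alpha> i * f (x i)) - f (\<Sum>i=1..n. \<alpha> i *\<^sub>R x i)"
    and "J\<beta> \<equiv> (\<Sum>i=1..n. \<beta> i * f (x i)) - f (\<Sum>i=1..n. \<beta> i *\<^sub>R x i)"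
  shows "m * J\<beta> \<le> J\<alpha> \<and> J\<alpha> \<le> M * J\<beta>
    \<and> (m * J\<beta> = J\<alpha> \<longleftrightarrow>
         (\<forall>j\<in>{1..n} - A.
            x j = (\<Sum>i\<in>A. (\<alpha> i / (\<Sum>l\<in>A. \<alpha> l)) *\<^sub>R x i) \<and>
            x j = (\<Sum>i=1..n. \<alpha> i *\<^sub>R x i)))
    \<and> (m * J\<beta> = J\<alpha> \<longleftrightarrow>
         (\<forall>j\<in>{1..n} - A.
            x j = (\<Sum>i\<in>A. (\<beta> i / (\<Sum>l\<in>A. \<beta> l)) *\<^sub>R x i) \<and>
            x j = (\<Sum>i=1..n. \<beta> i *\<^sub>R x i)))
    \<and> (J\<alpha> = M * J\<beta> \<longleftrightarrow>
         (\<forall>j\<in>{1..n} - B.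
            x j = (\<Sum>i\<in>B. (\<alpha> i / (\<Sum>l\<in>B. \<alpha> l)) *\<^sub>R x i) \<and>
            x j = (\<Sum>i=1..n. \<alpha> i *\<^sub>R x i)))
    \<and> (J\<alpha> = M * J\<beta> \<longleftrightarrow>
         (\<forall>j\<in>{1..n} - B.
            x j = (\<Sum>i\<in>B. (\<beta> i / (\<Sum>l\<in>B. \<beta> l)) *\<^sub>R x i) \<and>
            x j = (\<Sum>i=1..n. \<beta> i *\<^sub>R x i)))"
proof -
  let ?I = "{1..n}"
  let ?r = "\<lambda>k. \<alpha> k / \<beta> k"
  let ?ya = "\<Sum>i=1..n. \<alpha> i *\<^sub>R x i" and ?yb = "\<Sum>i=1..n. \<beta> i *\<^sub>R x i"
  let ?Fa = "\<Sum>i=1..n. \<alpha> i * f (x i)" and ?Fb = "\<Sum>i=1..n. \<beta> i * f (x i)"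
  have finI: "finite ?I" by simp
  have Ine: "?I \<noteq> {}" using n2 by simp
  have A': "A = {i\<in>?I. ?r i = m}" unfolding A_def m_def by simp
  have B': "B = {i\<in>?I. ?r i = M}" unfolding B_def M_def by simp
  have mle: "\<And>i. i \<in> ?I \<Longrightarrow> m \<le> ?r i" unfolding m_def by (rule Min_le) auto
  have Mge: "\<And>i. i \<in> ?I \<Longrightarrow> ?r i \<le> M" unfolding M_def by (rule Max_ge) auto
  have "m \<in> ?r ` ?I" unfolding m_def using Ine by (intro Min_in) auto
  then obtain i0 where i0: "i0 \<in> ?I" "?r i0 = m" by blast
  have mpos: "m > 0" using i0 apos bpos by auto
  have "M \<in> ?r ` ?I" unfolding M_def using Ine by (intro Max_in) auto
  then obtain i1 where i1: "i1 \<in> ?I" "?r i1 = M" by blast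
  have Mpos: "M > 0" using i1 apos bpos by auto
  have am: "\<And>i. i \<in> ?I \<Longrightarrow> m * \<beta> i \<le> \<alpha> i"
    using mle bpos by (simp add: pos_le_divide_eq)
  have aM: "\<And>i. i \<in> ?I \<Longrightarrow> \<alpha> i \<le> M * \<beta> i"
    using Mge bpos by (simp add: pos_divide_le_eq)
  have am_strict: "\<And>i. i \<in> ?I \<Longrightarrow> (\<alpha> i - m * \<beta> i > 0 \<longleftrightarrow> i \<notin> A)"
  proof -
    fix i assume i: "i \<in> ?I"
    have b: "\<beta> i > 0" using bpos i by auto
    have "\<alpha> i - m * \<beta> i > 0 \<longleftrightarrow> m < ?r i" using b by (simp add: pos_less_divide_eq)
    also have "\<dots> \<longleftrightarrow> ?r i \<noteq> m" using mle[OF i] by auto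
    finally show "(\<alpha> i - m * \<beta> i > 0 \<longleftrightarrow> i \<notin> A)" using i unfolding A' by auto
  qed
  have aM_strict: "\<And>i. i \<in> ?I \<Longrightarrow> ((M * \<beta> i - \<alpha> i) / M > 0 \<longleftrightarrow> i \<notin> B)"
  proof -
    fix i assume i: "i \<in> ?I"
    have b: "\<beta> i > 0" using bpos i by auto
    have "(M * \<beta> i - \<alpha> i) / M > 0 \<longleftrightarrow> M * \<beta> i - \<alpha> i > 0" using Mpos by (simp add: zero_less_divide_iff)
    also have "\<dots> \<longleftrightarrow> ?r i < M" using b by (simp add: pos_divide_less_eq)
    also have "\<dots> \<longleftrightarrow> ?r i \<noteq> M" using Mge[OF i] by auto
    finally show "((M * \<beta> i - \<alpha> i) / M > 0 \<longleftrightarrow> i \<notin> B)" using i unfolding B' by auto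
  qed
  have Aeq: "\<forall>i\<in>A. \<alpha> i = m * \<beta> i"
  proof
    fix i assume "i \<in> A"
    then have "i \<in> ?I" "?r i = m" unfolding A' by auto
    then show "\<alpha> i = m * \<beta> i" using bpos by (metis divide_eq_eq less_irrefl)
  qed
  have Beq: "\<forall>i\<in>B. \<alpha> i = M * \<beta> i"
  proof
    fix i assume "i \<in> B"
    then have "i \<in> ?I" "?r i = M" unfolding B' by auto
    then show "\<alpha> i = M * \<beta> i" using bpos by (metis divide_eq_eq less_irrefl)
  qed
  have AI: "A \<subseteq> ?I" and BI: "B \<subseteq> ?I" unfolding A' B' by auto
  have Ane: "A \<noteq> {}" using i0 unfolding A' by auto
  have Bne: "B \<noteq> {}" using i1 unfolding B' by auto
  show ?thesis
  proof (cases "\<forall>i\<in>?I. \<alpha> i = \<beta> i")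
    case True
    have r1: "\<And>i. i \<in> ?I \<Longrightarrow> ?r i = 1"
    proof -
      fix i assume i: "i \<in> ?I"
      then have "\<beta> i > 0" "\<alpha> i = \<beta> i" using bpos True by blast+
      then show "?r i = 1" by simp
    qed
    have "?r ` ?I = (\<lambda>_. 1) ` ?I" by (rule image_cong[OF refl r1])
    also have "\<dots> = {1}" using Ine by (simp only: image_constant_conv) simp
    finally have "?r ` ?I = {1}" .
    then have m1: "m = 1" and M1: "M = 1" unfolding m_def M_def by simp_all
    have "A = ?I" "B = ?I" unfolding A' B' m1 M1 using r1 by blast+
    moreover have "J\<alpha> = J\<beta>" unfolding J\<alpha>_def J\<beta>_def using True by simp
    ultimately show ?thesis using m1 M1 by simp
  next
    case False
    then obtain i2 where i2: "i2 \<in> ?I" "\<alpha> i2 \<noteq> \<beta> i2" by blast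
    have sumd: "(\<Sum>i\<in>?I. \<alpha> i - \<beta> i) = 0" using asum bsum by (simp add: sum_subtractf)
    have m_le1: "m \<le> 1"
    proof -
      have "(\<Sum>i\<in>?I. m * \<beta> i) \<le> (\<Sum>i\<in>?I. \<alpha> i)" using am by (intro sum_mono) auto
      then show ?thesis using asum bsum by (simp add: sum_distrib_left[symmetric])
    qed
    have M_ge1: "M \<ge> 1"
    proof -
      have "(\<Sum>i\<in>?I. \<alpha> i) \<le> (\<Sum>i\<in>?I. M * \<beta> i)" using aM by (intro sum_mono) auto
      then show ?thesis using asum bsum by (simp add: sum_distrib_left[symmetric])
    qed
    have m1: "m < 1"
    proof (rule ccontr)
      assume "\<not> m < 1"
      then have "m = 1" using m_le1 by simp
      then have nn: "\<forall>i\<in>?I. \<alpha> i - \<beta> i \<ge> 0" using am by auto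
      have "(\<Sum>i\<in>?I. \<alpha> i - \<beta> i) = 0 \<longleftrightarrow> (\<forall>i\<in>?I. \<alpha> i - \<beta> i = 0)"
        by (rule sum_nonneg_eq_0_iff[OF finI]) (use nn in blast)
      then have "\<alpha> i2 - \<beta> i2 = 0" using sumd i2(1) by blast
      then show False using i2(2) by simp
    qed
    have M1: "M > 1"
    proof (rule ccontr)
      assume "\<not> M > 1"
      then have "M = 1" using M_ge1 by simp
      then have nn: "\<forall>i\<in>?I. \<beta> i - \<alpha> i \<ge> 0" using aM by auto
      have sumd': "(\<Sum>i\<in>?I. \<beta> i - \<alpha> i) = 0" using asum bsum by (simp add: sum_subtractf)
      have "(\<Sum>i\<in>?I. \<beta> i - \<alpha> i) = 0 \<longleftrightarrow> (\<forall>i\<in>?I. \<beta> i - \<alpha> i = 0)"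
        by (rule sum_nonneg_eq_0_iff[OF finI]) (use nn in blast)
      then have "\<beta> i2 - \<alpha> i2 = 0" using sumd' i2(1) by blast
      then show False using i2(2) by simp
    qed
    have IAne: "?I - A \<noteq> {}"
    proof
      assume "?I - A = {}"
      then have "\<forall>i\<in>?I. \<alpha> i = m * \<beta> i" using Aeq by blast
      then have "(\<Sum>i\<in>?I. \<alpha> i) = m * (\<Sum>i\<in>?I. \<beta> i)" by (simp add: sum_distrib_left)
      then show False using asum bsum m1 by simp
    qed
    have IBne: "?I - B \<noteq> {}"
    proof
      assume "?I - B = {}"
      then have "\<forall>i\<in>?I. \<alpha> i = M * \<beta> i" using Beq by blast
      then have "(\<Sum>i\<in>?I. \<alpha> i) = M * (\<Sum>i\<in>?I. \<beta> i)" by (simp add: sum_distrib_left)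
      then show False using asum bsum M1 by simp
    qed
    have ybC: "?yb \<in> C" using convex_sum[OF finI convC bsum] bpos xC by (simp add: less_imp_le)
    have yaC: "?ya \<in> C" using convex_sum[OF finI convC asum] apos xC by (simp add: less_imp_le)
    have n0: "0 \<notin> ?I" by simp
    define w where "w = (\<lambda>i. \<alpha> i - m * \<beta> i)(0 := m)"
    define z where "z = x(0 := ?yb)"
    have wI: "\<And>i. i \<in> ?I \<Longrightarrow> w i = \<alpha> i - m * \<beta> i" unfolding w_def by auto
    have zI: "\<And>i. i \<in> ?I \<Longrightarrow> z i = x i" unfolding z_def by auto
    have L1: "sum w (insert 0 ?I) = 1"
    proof -
      have "sum w (insert 0 ?I) = m + (\<Sum>i\<in>?I. \<alpha> i - m * \<beta> i)"
        using n0 wI by (simp add: w_def[of] sum.insert)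
      also have "\<dots> = 1" using asum bsum by (simp add: sum_subtractf sum_distrib_left[symmetric])
      finally show ?thesis .
    qed
    have Lw: "\<forall>i\<in>insert 0 ?I. w i \<ge> 0" using am mpos wI by (auto simp: w_def)
    have Lz: "\<forall>i\<in>insert 0 ?I. z i \<in> C" using xC ybC zI by (auto simp: z_def)
    have L2: "(\<Sum>i\<in>insert 0 ?I. w i *\<^sub>R z i) = ?ya"
    proof -
      have "(\<Sum>i\<in>insert 0 ?I. w i *\<^sub>R z i) = m *\<^sub>R ?yb + (\<Sum>i\<in>?I. (\<alpha> i - m * \<beta> i) *\<^sub>R x i)"
        using n0 wI zI by (simp add: sum.insert w_def z_def)
      also have "\<dots> = ?ya"
        by (simp add: algebra_simps sum_subtractf scaleR_sum_right)
      finally show ?thesis .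
    qed
    have L3: "(\<Sum>i\<in>insert 0 ?I. w i * f (z i)) = m * f ?yb + ?Fa - m * ?Fb"
    proof -
      have "(\<Sum>i\<in>insert 0 ?I. w i * f (z i)) = m * f ?yb + (\<Sum>i\<in>?I. (\<alpha> i - m * \<beta> i) * f (x i))"
        using n0 wI zI by (simp add: sum.insert w_def z_def)
      also have "\<dots> = m * f ?yb + ?Fa - m * ?Fb"
        by (simp add: algebra_simps sum_subtractf sum_distrib_left)
      finally show ?thesis .
    qed
    note JL = jensen_strict[OF strict finite.insertI[OF finI] Lw L1 Lz, unfolded L2 L3]
    have left_le: "m * J\<beta> \<le> J\<alpha>" using JL(1) unfolding J\<alpha>_def J\<beta>_def by (simp add: algebra_simps)
    have left_eq0: "m * J\<beta> = J\<alpha> \<longleftrightarrow> f ?ya = m * f ?yb + ?Fa - m * ?Fb"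
      unfolding J\<alpha>_def J\<beta>_def by (auto simp: algebra_simps)
    have left_eq: "m * J\<beta> = J\<alpha> \<longleftrightarrow> (?yb = ?ya \<and> (\<forall>j\<in>?I-A. x j = ?ya))"
    proof -
      have "(\<forall>i\<in>insert 0 ?I. w i > 0 \<longrightarrow> z i = ?ya) \<longleftrightarrow> (?yb = ?ya \<and> (\<forall>j\<in>?I-A. x j = ?ya))"
        using am_strict wI zI mpos by (auto simp: w_def z_def)
      then show ?thesis using left_eq0 JL(2) by simp
    qed
    define w' where "w' = (\<lambda>i. (M * \<beta> i - \<alpha> i) / M)(0 := 1 / M)"
    define z' where "z' = x(0 := ?ya)"
    have wI': "\<And>i. i \<in> ?I \<Longrightarrow> w' i = (M * \<beta> i - \<alpha> i) / M" unfolding w'_def by auto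
    have zI': "\<And>i. i \<in> ?I \<Longrightarrow> z' i = x i" unfolding z'_def by auto
    have R1: "sum w' (insert 0 ?I) = 1"
    proof -
      have "sum w' (insert 0 ?I) = 1 / M + (\<Sum>i\<in>?I. (M * \<beta> i - \<alpha> i) / M)"
        using n0 wI' by (simp add: w'_def sum.insert)
      also have "(\<Sum>i\<in>?I. (M * \<beta> i - \<alpha> i) / M) = (M - 1) / M" using asum bsum
        by (simp add: sum_divide_distrib[symmetric] sum_subtractf sum_distrib_left[symmetric])
      finally show ?thesis using Mpos by (simp add: field_simps)
    qed
    have Rw: "\<forall>i\<in>insert 0 ?I. w' i \<ge> 0" using aM Mpos wI' by (auto simp: w'_def)
    have Rz: "\<forall>i\<in>insert 0 ?I. z' i \<in> C" using xC yaC zI' by (auto simp: z'_def)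
    have R2: "(\<Sum>i\<in>insert 0 ?I. w' i *\<^sub>R z' i) = ?yb"
    proof -
      have "(\<Sum>i\<in>insert 0 ?I. w' i *\<^sub>R z' i) = (1 / M) *\<^sub>R ?ya + (\<Sum>i\<in>?I. ((M * \<beta> i - \<alpha> i) / M) *\<^sub>R x i)"
        using n0 wI' zI' by (simp add: sum.insert w'_def z'_def)
      also have "(\<Sum>i\<in>?I. ((M * \<beta> i - \<alpha> i) / M) *\<^sub>R x i) = ?yb - (1 / M) *\<^sub>R ?ya"
        using Mpos by (simp add: algebra_simps diff_divide_distrib sum_subtractf scaleR_sum_right)
      finally show ?thesis by simp
    qed
    have R3: "(\<Sum>i\<in>insert 0 ?I. w' i * f (z' i)) = (1 / M) * f ?ya + ?Fb - (1 / M) * ?Fa"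
    proof -
      have "(\<Sum>i\<in>insert 0 ?I. w' i * f (z' i)) = (1 / M) * f ?ya + (\<Sum>i\<in>?I. ((M * \<beta> i - \<alpha> i) / M) * f (x i))"
        using n0 wI' zI' by (simp add: sum.insert w'_def z'_def)
      also have "(\<Sum>i\<in>?I. ((M * \<beta> i - \<alpha> i) / M) * f (x i)) = ?Fb - (1 / M) * ?Fa"
        using Mpos by (simp add: algebra_simps diff_divide_distrib sum_subtractf sum_distrib_left)
      finally show ?thesis by simp
    qed
    note JR = jensen_strict[OF strict finite.insertI[OF finI] Rw R1 Rz, unfolded R2 R3]
    have keyR: "J\<alpha> - M * J\<beta> = M * (f ?yb - ((1 / M) * f ?ya + ?Fb - (1 / M) * ?Fa))"
      unfolding J\<alpha>_def J\<beta>_def using Mpos by (simp add: algebra_simps)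
    have right_le: "J\<alpha> \<le> M * J\<beta>"
    proof -
      have "M * (f ?yb - ((1 / M) * f ?ya + ?Fb - (1 / M) * ?Fa)) \<le> 0"
        using JR(1) Mpos by (simp add: mult_nonneg_nonpos)
      then show ?thesis using keyR by linarith
    qed
    have right_eq0: "J\<alpha> = M * J\<beta> \<longleftrightarrow> f ?yb = (1 / M) * f ?ya + ?Fb - (1 / M) * ?Fa"
    proof -
      have "J\<alpha> = M * J\<beta> \<longleftrightarrow> J\<alpha> - M * J\<beta> = 0" by simp
      also have "\<dots> \<longleftrightarrow> f ?yb - ((1 / M) * f ?ya + ?Fb - (1 / M) * ?Fa) = 0" using keyR Mpos by simp
      finally show ?thesis by simp
    qed
    have right_eq: "J\<alpha> = M * J\<beta> \<longleftrightarrow> (?yb = ?ya \<and> (\<forall>j\<in>?I-B. x j = ?ya))"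
    proof -
      have "(\<forall>i\<in>insert 0 ?I. w' i > 0 \<longrightarrow> z' i = ?yb) \<longleftrightarrow> (?ya = ?yb \<and> (\<forall>j\<in>?I-B. x j = ?yb))"
        using aM_strict wI' zI' Mpos by (auto simp: w'_def z'_def)
      also have "\<dots> \<longleftrightarrow> (?yb = ?ya \<and> (\<forall>j\<in>?I-B. x j = ?ya))" by auto
      finally show ?thesis using right_eq0 JR(2) by simp
    qed
    note AL = alg_lemma[OF finI AI Ane IAne asum bsum apos bpos mpos Aeq, of x]
    note BL = alg_lemma[OF finI BI Bne IBne asum bsum apos bpos Mpos Beq, of x]
    show ?thesis using left_le right_le left_eq right_eq AL BL by simp
  qed
qed

end
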